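(* Let $G$ be a finite group. Then the non-inverse graph $\Gamma_{NI}(G)$ is minimally edge connected if and only if either every non-identity element of $G$ is self-inverse, or no non-identity element of $G$ is self-inverse.
   Context: The non-inverse graph $\Gamma_{NI}(G)$ of a group $G$ is the simple undirected graph with vertex set $G$ in which two distinct elements $x,y$ are adjacent if and only if $y\neq x^{-1}$. An element $x$ is self-inverse if $x=x^{-1}$. For a connected graph $\Gamma$, an edge cut-set is a set $S$ of edges such that $\Gamma-S$ is disconnected or has just one vertex, and the edge connectivity $\kappa'(\Gamma)$ is the smallest size of an edge cut-set. $\Gamma$ is minimally edge connected if $\kappa'(\Gamma-\epsilon)=\kappa'(\Gamma)-1$ for every edge $\epsilon$ of $\Gamma$. *)

theory Defs
  imports "HOL-Algebra.Group"
begin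

text \<open>Simple undirected graphs are given by a vertex set V and a set E of
  2-element subsets of V (edges).\<close>

definition adj_rel :: "'a set set \<Rightarrow> ('a \<times> 'a) set" where
  "adj_rel E = {(x, y). {x, y} \<in> E}"

definition graph_connected :: "'a set \<Rightarrow> 'a set set \<Rightarrow> bool" where
  "graph_connected V E \<longleftrightarrow> (\<forall>x\<in>V. \<forall>y\<in>V. (x, y) \<in> (adj_rel E)\<^sup>*)"

definition is_edge_cut :: "'a set \<Rightarrow> 'a set set \<Rightarrow> 'a set set \<Rightarrow> bool" where
  "is_edge_cut V E S \<longleftrightarrow> S \<subseteq> E \<and> finite S \<and>
     (\<not> graph_connected V (E - S) \<or> card V = 1)"

definition edge_connectivity :: "'a set \<Rightarrow> 'a set set \<Rightarrow> nat" where
  "edge_connectivity V E = (LEAST k. \<exists>S. is_edge_cut V E S \<and> card S = k)"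

definition min_edge_connected :: "'a set \<Rightarrow> 'a set set \<Rightarrow> bool" where
  "min_edge_connected V E \<longleftrightarrow> graph_connected V E \<and>
     (\<forall>e\<in>E. edge_connectivity V (E - {e}) = edge_connectivity V E - 1)"

definition NI_edges :: "('a, 'b) monoid_scheme \<Rightarrow> 'a set set" where
  "NI_edges G = {{x, y} | x y. x \<in> carrier G \<and> y \<in> carrier G \<and> x \<noteq> y \<and> y \<noteq> inv\<^bsub>G\<^esub> x}"

end

theory Submission
  imports Defs
begin

lemma ec_le: "is_edge_cut V F S \<Longrightarrow> edge_connectivity V F \<le> card S"
  unfolding edge_connectivity_def by (rule Least_le) blast

lemma cut_exists:
  assumes "finite V" "V \<noteq> {}" "finite F"
  shows "is_edge_cut V F F"
proof (cases "card V = 1")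
  case True then show ?thesis using assms unfolding is_edge_cut_def by auto
next
  case False
  have "\<not> card V \<le> Suc 0" using False assms by (simp add: card_gt_0_iff le_Suc_eq)
  then obtain u w where "u \<in> V" "w \<in> V" "u \<noteq> w"
    using card_le_Suc0_iff_eq[OF assms(1)] by blast
  moreover have "adj_rel ({}::'a set set) = {}" unfolding adj_rel_def by auto
  ultimately have "\<not> graph_connected V (F - F)" unfolding graph_connected_def by auto
  then show ?thesis using assms unfolding is_edge_cut_def by auto
qed

lemma ec_ge:
  assumes "finite V" "V \<noteq> {}" "finite F" "\<And>S. is_edge_cut V F S \<Longrightarrow> k \<le> card S"
  shows "k \<le> edge_connectivity V F"
proof -
  have ex: "\<exists>S. is_edge_cut V F S \<and> card S = card F" using cut_exists[OF assms(1-3)] by blast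
  have "\<exists>S. is_edge_cut V F S \<and> card S = edge_connectivity V F"
    unfolding edge_connectivity_def by (rule LeastI_ex) (use ex in blast)
  then show ?thesis using assms(4) by metis
qed

lemma deg_cut:
  assumes "v \<in> V" "w \<in> V" "v \<noteq> w" "finite F"
  shows "is_edge_cut V F {f\<in>F. v \<in> f}"
proof -
  have "(v, w) \<notin> (adj_rel (F - {f\<in>F. v \<in> f}))\<^sup>*"
  proof
    assume "(v, w) \<in> (adj_rel (F - {f\<in>F. v \<in> f}))\<^sup>*"
    then show False
      by (cases rule: converse_rtranclE) (use assms in \<open>auto simp: adj_rel_def\<close>)
  qed
  then show ?thesis using assms unfolding is_edge_cut_def graph_connected_def by auto
qed

lemma separation:
  assumes "\<not> graph_connected V F'"
  obtains A B where "A \<union> B = V" "A \<inter> B = {}" "A \<noteq> {}" "B \<noteq> {}"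
    "\<And>x y. x \<in> A \<Longrightarrow> y \<in> B \<Longrightarrow> {x, y} \<notin> F'"
proof -
  obtain u w where uw: "u \<in> V" "w \<in> V" "(u, w) \<notin> (adj_rel F')\<^sup>*"
    using assms unfolding graph_connected_def by auto
  define A where "A = {y\<in>V. (u, y) \<in> (adj_rel F')\<^sup>*}"
  have uA: "u \<in> A" using uw unfolding A_def by auto
  have wA: "w \<in> V - A" using uw unfolding A_def by auto
  have cross: "{x, y} \<notin> F'" if "x \<in> A" "y \<in> V - A" for x y
  proof
    assume "{x, y} \<in> F'"
    then have xy: "(x, y) \<in> adj_rel F'" unfolding adj_rel_def by auto
    have ux: "(u, x) \<in> (adj_rel F')\<^sup>*" using that(1) unfolding A_def by simp
    have "(u, y) \<in> (adj_rel F')\<^sup>*" by (rule rtrancl_into_rtrancl[OF ux xy])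
    then show False using that unfolding A_def by simp
  qed
  have 1: "A \<union> (V - A) = V" unfolding A_def by blast
  have 2: "A \<inter> (V - A) = {}" by blast
  have 3: "A \<noteq> {}" using uA by blast
  have 4: "V - A \<noteq> {}" using wA by blast
  show ?thesis by (rule that[OF 1 2 3 4]) (rule cross)
qed

lemma cross_card:
  assumes "A \<inter> B = {}" "finite S" "\<And>x y. x \<in> A \<Longrightarrow> y \<in> B \<Longrightarrow> {x, y} \<in> F \<Longrightarrow> {x, y} \<in> S"
  shows "card {(x, y). (x, y) \<in> A \<times> B \<and> {x, y} \<in> F} \<le> card S"
proof (rule card_inj_on_le[where f = "\<lambda>(x, y). {x, y}"])
  show "inj_on (\<lambda>(x, y). {x, y}) {(x, y). (x, y) \<in> A \<times> B \<and> {x, y} \<in> F}"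
    using assms(1) by (auto simp: inj_on_def doubleton_eq_iff)
  show "(\<lambda>(x, y). {x, y}) ` {(x, y). (x, y) \<in> A \<times> B \<and> {x, y} \<in> F} \<subseteq> S"
    using assms(3) by auto
qed (use assms in auto)

lemma count_split:
  assumes "finite A" "finite B"
  shows "card A * card B \<le> card {(x, y). (x, y) \<in> A \<times> B \<and> P x y} + card {(x, y). (x, y) \<in> A \<times> B \<and> \<not> P x y}"
proof -
  define X where "X = {(x, y). (x, y) \<in> A \<times> B \<and> P x y}"
  define Y where "Y = {(x, y). (x, y) \<in> A \<times> B \<and> \<not> P x y}"
  have eq: "A \<times> B = X \<union> Y" unfolding X_def Y_def by blast
  have "card (X \<union> Y) \<le> card X + card Y" by (rule card_Un_le)
  then have "card (A \<times> B) \<le> card X + card Y" by (simp only: eq)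
  then show ?thesis unfolding X_def Y_def by (simp add: card_cartesian_product)
qed

lemma lower_core:
  assumes "finite V" "V \<noteq> {}" "finite F"
    and "card V = 1 \<Longrightarrow> k = 0"
    and "\<And>A B. A \<union> B = V \<Longrightarrow> A \<inter> B = {} \<Longrightarrow> A \<noteq> {} \<Longrightarrow> B \<noteq> {} \<Longrightarrow>
        k + card {(x, y). (x, y) \<in> A \<times> B \<and> \<not> {x, y} \<in> F} \<le> card A * card B"
  shows "k \<le> edge_connectivity V F"
proof (rule ec_ge[OF assms(1-3)])
  fix S assume S: "is_edge_cut V F S"
  show "k \<le> card S"
  proof (cases "card V = 1")
    case True then show ?thesis using assms(4) by simp
  next
    case False
    then have nc: "\<not> graph_connected V (F - S)" using S unfolding is_edge_cut_def by auto
    then obtain A B where AB: "A \<union> B = V" "A \<inter> B = {}" "A \<noteq> {}" "B \<noteq> {}"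
      "\<And>x y. x \<in> A \<Longrightarrow> y \<in> B \<Longrightarrow> {x, y} \<notin> F - S" using separation[OF nc] by blast
    have fin: "finite A" "finite B" using AB(1) assms(1) by auto
    have "card {(x, y). (x, y) \<in> A \<times> B \<and> {x, y} \<in> F} \<le> card S"
      by (rule cross_card) (use AB S in \<open>auto simp: is_edge_cut_def\<close>)
    moreover have "card A * card B \<le> card {(x, y). (x, y) \<in> A \<times> B \<and> {x, y} \<in> F} + card {(x, y). (x, y) \<in> A \<times> B \<and> \<not> {x, y} \<in> F}"
      by (rule count_split[OF fin])
    moreover have "k + card {(x, y). (x, y) \<in> A \<times> B \<and> \<not> {x, y} \<in> F} \<le> card A * card B"
      using assms(5) AB by blast
    ultimately show ?thesis by linarith
  qed
qed

lemma inj_bound: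
  assumes "finite A" "finite B" "P \<subseteq> A \<times> B" "inj_on fst P" "inj_on snd P"
  shows "card P \<le> min (card A) (card B)"
proof -
  have "card P \<le> card A" by (rule card_inj_on_le[OF assms(4)]) (use assms in auto)
  moreover have "card P \<le> card B" by (rule card_inj_on_le[OF assms(5)]) (use assms in auto)
  ultimately show ?thesis by simp
qed

lemma L2': "(a::nat) \<ge> 1 \<Longrightarrow> a \<le> b \<Longrightarrow> a + b - 2 + a \<le> a * b"
proof -
  assume h: "a \<ge> 1" "a \<le> b"
  show ?thesis
  proof (cases "a = 1")
    case True then show ?thesis using h by simp
  next
    case False
    define c where "c = a - 2"
    define d where "d = b - 2"
    have ac: "a = c + 2" "b = d + 2" using h False unfolding c_def d_def by auto
    have "(c + 2) * (d + 2) = c * d + 2 * c + 2 * d + 4" by (simp add: algebra_simps)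
    then show ?thesis unfolding ac by linarith
  qed
qed

lemma L2: "(a::nat) \<ge> 1 \<Longrightarrow> b \<ge> 1 \<Longrightarrow> a + b - 2 + min a b \<le> a * b"
proof (cases "a \<le> b")
  case True
  assume "a \<ge> 1" "b \<ge> 1"
  then show ?thesis using L2'[of a b] True by (simp add: min_def)
next
  case False
  assume "a \<ge> 1" "b \<ge> 1"
  then have "b + a - 2 + b \<le> b * a" using L2'[of b a] False by simp
  then show ?thesis using False by (simp add: min_def add.commute mult.commute)
qed

lemma L3: "(a::nat) \<ge> 1 \<Longrightarrow> b \<ge> 1 \<Longrightarrow> a + b \<ge> 3 \<Longrightarrow> a + b - 3 + min a b + 1 \<le> a * b"
proof -
  assume h: "a \<ge> 1" "b \<ge> 1" "a + b \<ge> 3"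
  have "a + b - 2 + min a b \<le> a * b" using L2 h by blast
  moreover have "a + b - 3 + 1 = a + b - 2" using h by linarith
  ultimately show ?thesis by linarith
qed

lemma L1: "(a::nat) \<ge> 1 \<Longrightarrow> b \<ge> 1 \<Longrightarrow> a + b - 1 \<le> a * b"
proof -
  assume h: "a \<ge> 1" "b \<ge> 1"
  have "a + b - 2 + min a b \<le> a * b" using L2 h by blast
  moreover have "min a b \<ge> 1" using h by simp
  moreover have "a + b - 1 \<le> a + b - 2 + 1" by linarith
  ultimately show ?thesis by linarith
qed

lemma NI_mem:
  assumes "group G" "x \<in> carrier G" "y \<in> carrier G" "x \<noteq> y"
  shows "{x, y} \<in> NI_edges G \<longleftrightarrow> y \<noteq> inv\<^bsub>G\<^esub> x"
proof -
  interpret group G by fact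
  have sym: "y = inv\<^bsub>G\<^esub> x \<longleftrightarrow> x = inv\<^bsub>G\<^esub> y" using assms by (metis inv_inv)
  show ?thesis unfolding NI_edges_def
  proof
    assume "{x, y} \<in> {{x, y} |x y. x \<in> carrier G \<and> y \<in> carrier G \<and> x \<noteq> y \<and> y \<noteq> inv\<^bsub>G\<^esub> x}"
    then obtain x' y' where "{x, y} = {x', y'}" "x' \<in> carrier G" "y' \<in> carrier G" "y' \<noteq> inv\<^bsub>G\<^esub> x'" by blast
    then show "y \<noteq> inv\<^bsub>G\<^esub> x" using sym assms by (auto simp: doubleton_eq_iff)
  next
    assume "y \<noteq> inv\<^bsub>G\<^esub> x"
    then show "{x, y} \<in> {{x, y} |x y. x \<in> carrier G \<and> y \<in> carrier G \<and> x \<noteq> y \<and> y \<noteq> inv\<^bsub>G\<^esub> x}"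
      using assms by blast
  qed
qed

lemma NI_fin: "finite (carrier G) \<Longrightarrow> finite (NI_edges G)"
proof -
  assume "finite (carrier G)"
  moreover have "NI_edges G \<subseteq> Pow (carrier G)" unfolding NI_edges_def by auto
  ultimately show ?thesis by (meson finite_Pow_iff finite_subset)
qed

lemma NI_cases:
  assumes "f \<in> NI_edges G"
  obtains x y where "f = {x, y}" "x \<in> carrier G" "y \<in> carrier G" "x \<noteq> y" "y \<noteq> inv\<^bsub>G\<^esub> x"
  using assms unfolding NI_edges_def by blast

lemma deg_le:
  assumes "group G" "v \<in> carrier G" "finite (carrier G)"
  shows "card {f\<in>NI_edges G. v \<in> f} \<le> card (carrier G) - card {v, inv\<^bsub>G\<^esub> v}"
proof -
  interpret group G by fact
  have "{f\<in>NI_edges G. v \<in> f} \<subseteq> (\<lambda>y. {v, y}) ` (carrier G - {v, inv\<^bsub>G\<^esub> v})"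
  proof
    fix f assume "f \<in> {f\<in>NI_edges G. v \<in> f}"
    then obtain x y where f: "f = {x, y}" "x \<in> carrier G" "y \<in> carrier G" "x \<noteq> y" "y \<noteq> inv\<^bsub>G\<^esub> x" "v \<in> f"
      by (auto elim: NI_cases)
    show "f \<in> (\<lambda>y. {v, y}) ` (carrier G - {v, inv\<^bsub>G\<^esub> v})"
    proof (cases "v = x")
      case True then show ?thesis using f by auto
    next
      case False
      then have "v = y" using f by auto
      moreover have "x \<noteq> inv\<^bsub>G\<^esub> y" using f by (metis inv_inv)
      ultimately show ?thesis using f by (auto simp: insert_commute)
    qed
  qed
  then have "card {f\<in>NI_edges G. v \<in> f} \<le> card ((\<lambda>y. {v, y}) ` (carrier G - {v, inv\<^bsub>G\<^esub> v}))"
    using assms by (intro card_mono) auto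
  also have "\<dots> \<le> card (carrier G - {v, inv\<^bsub>G\<^esub> v})" by (rule card_image_le) (use assms in auto)
  also have "\<dots> = card (carrier G) - card {v, inv\<^bsub>G\<^esub> v}"
    by (rule card_Diff_subset) (use assms in auto)
  finally show ?thesis .
qed

lemma upE:
  assumes "group G" "finite (carrier G)" "v \<in> carrier G" "w \<in> carrier G" "v \<noteq> w"
  shows "edge_connectivity (carrier G) (NI_edges G) \<le> card (carrier G) - card {v, inv\<^bsub>G\<^esub> v}"
proof -
  have "is_edge_cut (carrier G) (NI_edges G) {f\<in>NI_edges G. v \<in> f}"
    by (rule deg_cut) (use assms NI_fin in auto)
  then show ?thesis using deg_le[OF assms(1,3,2)] ec_le by fastforce
qed

lemma upEe:
  assumes "group G" "finite (carrier G)" "e \<in> NI_edges G" "v \<in> e"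
  shows "edge_connectivity (carrier G) (NI_edges G - {e}) \<le> card (carrier G) - card {v, inv\<^bsub>G\<^esub> v} - 1"
proof -
  obtain x y where e: "e = {x, y}" "x \<in> carrier G" "y \<in> carrier G" "x \<noteq> y"
    using assms(3) by (auto elim: NI_cases)
  obtain w where w: "w \<in> carrier G" "w \<noteq> v" "v \<in> carrier G" using e assms(4) by auto
  have "is_edge_cut (carrier G) (NI_edges G - {e}) {f\<in>NI_edges G - {e}. v \<in> f}"
    by (rule deg_cut) (use assms NI_fin w in auto)
  then have "edge_connectivity (carrier G) (NI_edges G - {e}) \<le> card {f\<in>NI_edges G - {e}. v \<in> f}"
    by (rule ec_le)
  also have "{f\<in>NI_edges G - {e}. v \<in> f} = {f\<in>NI_edges G. v \<in> f} - {e}" by auto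
  also have "card \<dots> = card {f\<in>NI_edges G. v \<in> f} - 1"
    using assms by (intro card_Diff_singleton) auto
  finally show ?thesis using deg_le[OF assms(1) w(3) assms(2)] by linarith
qed

lemma lowX:
  assumes "group G" "finite (carrier G)" "card (carrier G) = 1 \<Longrightarrow> k = 0"
    and "\<And>A B. A \<union> B = carrier G \<Longrightarrow> A \<inter> B = {} \<Longrightarrow> A \<noteq> {} \<Longrightarrow> B \<noteq> {} \<Longrightarrow>
        k + card {(x, y). (x, y) \<in> A \<times> B \<and> (y = inv\<^bsub>G\<^esub> x \<or> {x, y} \<in> X)} \<le> card A * card B"
  shows "k \<le> edge_connectivity (carrier G) (NI_edges G - X)"
proof (rule lower_core)
  show "carrier G \<noteq> {}" using group.is_monoid[OF assms(1)] monoid.one_closed by blast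
  show "finite (NI_edges G - X)" using NI_fin[OF assms(2)] by auto
next
  fix A B assume AB: "A \<union> B = carrier G" "A \<inter> B = {}" "A \<noteq> {}" "B \<noteq> {}"
  have "{(x, y). (x, y) \<in> A \<times> B \<and> \<not> {x, y} \<in> NI_edges G - X} =
        {(x, y). (x, y) \<in> A \<times> B \<and> (y = inv\<^bsub>G\<^esub> x \<or> {x, y} \<in> X)}"
  proof -
    have "\<not> {x, y} \<in> NI_edges G - X \<longleftrightarrow> (y = inv\<^bsub>G\<^esub> x \<or> {x, y} \<in> X)" if "x \<in> A" "y \<in> B" for x y
    proof -
      have "x \<noteq> y" using that AB by auto
      then show ?thesis using NI_mem[OF assms(1), of x y] that AB by blast
    qed
    then show ?thesis by auto
  qed
  then show "k + card {(x, y). (x, y) \<in> A \<times> B \<and> \<not> {x, y} \<in> NI_edges G - X} \<le> card A * card B"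
    using assms(4)[OF AB] by simp
qed (use assms in auto)

lemma part_card:
  assumes "A \<union> B = V" "A \<inter> B = {}" "A \<noteq> {}" "B \<noteq> {}" "finite V"
  shows "card A + card B = card V" "card A \<ge> 1" "card B \<ge> 1" "finite A" "finite B"
proof -
  show fA: "finite A" and fB: "finite B" using assms by auto
  show "card A + card B = card V" using assms card_Un_disjoint[OF fA fB] by simp
  show "card A \<ge> 1" "card B \<ge> 1" using assms fA fB by (auto simp: Suc_le_eq card_gt_0_iff)
qed

lemma inv_pairs_bound:
  assumes "group G" "A \<union> B = carrier G" "finite A" "finite B"
  shows "card {(x, y). (x, y) \<in> A \<times> B \<and> y = inv\<^bsub>G\<^esub> x} \<le> min (card A) (card B)"
proof (rule inj_bound[OF assms(3,4)])
  interpret group G by fact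
  show "inj_on fst {(x, y). (x, y) \<in> A \<times> B \<and> y = inv\<^bsub>G\<^esub> x}"
    by (rule inj_onI) auto
  show "inj_on snd {(x, y). (x, y) \<in> A \<times> B \<and> y = inv\<^bsub>G\<^esub> x}"
  proof (rule inj_onI)
    fix p q assume p: "p \<in> {(x, y). (x, y) \<in> A \<times> B \<and> y = inv\<^bsub>G\<^esub> x}"
      and q: "q \<in> {(x, y). (x, y) \<in> A \<times> B \<and> y = inv\<^bsub>G\<^esub> x}" and eq: "snd p = snd q"
    obtain x y where pxy: "p = (x, y)" by fastforce
    obtain x' y' where qxy: "q = (x', y')" by fastforce
    have "x \<in> carrier G" "x' \<in> carrier G" using p q pxy qxy assms(2) by auto
    moreover have "inv\<^bsub>G\<^esub> x = inv\<^bsub>G\<^esub> x'" using p q pxy qxy eq by simp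
    ultimately have "x = x'" by (metis inv_inv)
    then show "p = q" using pxy qxy eq by simp
  qed
qed blast

lemma low_gen_E:
  assumes "group G" "finite (carrier G)"
  shows "card (carrier G) - 2 \<le> edge_connectivity (carrier G) (NI_edges G)"
proof -
  have "card (carrier G) - 2 \<le> edge_connectivity (carrier G) (NI_edges G - {})"
  proof (rule lowX[OF assms])
    fix A B assume AB: "A \<union> B = carrier G" "A \<inter> B = {}" "A \<noteq> {}" "B \<noteq> {}"
    note pc = part_card[OF AB assms(2)]
    have eq: "{(x, y). (x, y) \<in> A \<times> B \<and> (y = inv\<^bsub>G\<^esub> x \<or> {x, y} \<in> {})} = {(x, y). (x, y) \<in> A \<times> B \<and> y = inv\<^bsub>G\<^esub> x}"
      by simp
    have "card {(x, y). (x, y) \<in> A \<times> B \<and> y = inv\<^bsub>G\<^esub> x} \<le> min (card A) (card B)"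
      by (rule inv_pairs_bound[OF assms(1) AB(1) pc(4,5)])
    then show "card (carrier G) - 2 + card {(x, y). (x, y) \<in> A \<times> B \<and> (y = inv\<^bsub>G\<^esub> x \<or> {x, y} \<in> {})} \<le> card A * card B"
      unfolding eq using L2[OF pc(2,3)] pc(1) by linarith
  qed simp
  then show ?thesis by simp
qed

lemma card_le1:
  assumes "\<And>p q. p \<in> P \<Longrightarrow> q \<in> P \<Longrightarrow> p = q"
  shows "card P \<le> 1"
proof (cases "P = {}")
  case True then show ?thesis by simp
next
  case False
  then obtain p where "p \<in> P" by blast
  then have "P \<subseteq> {p}" using assms by blast
  then have "card P \<le> card {p}" by (rule card_mono[rotated]) simp
  then show ?thesis by simp
qed

lemma low_gen_Ee:
  assumes "group G" "finite (carrier G)" "card (carrier G) \<ge> 3"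
  shows "card (carrier G) - 3 \<le> edge_connectivity (carrier G) (NI_edges G - {e})"
proof (rule lowX[OF assms(1,2)])
  fix A B assume AB: "A \<union> B = carrier G" "A \<inter> B = {}" "A \<noteq> {}" "B \<noteq> {}"
  note pc = part_card[OF AB assms(2)]
  define P1 where "P1 = {(x, y). (x, y) \<in> A \<times> B \<and> y = inv\<^bsub>G\<^esub> x}"
  define P2 where "P2 = {(x, y). (x, y) \<in> A \<times> B \<and> {x, y} = e}"
  have c1: "card P1 \<le> min (card A) (card B)"
    unfolding P1_def by (rule inv_pairs_bound[OF assms(1) AB(1) pc(4,5)])
  have c2: "card P2 \<le> 1"
  proof (rule card_le1)
    fix p q assume "p \<in> P2" "q \<in> P2"
    then show "p = q" using AB(2) unfolding P2_def by (auto simp: doubleton_eq_iff)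
  qed
  have eq: "{(x, y). (x, y) \<in> A \<times> B \<and> (y = inv\<^bsub>G\<^esub> x \<or> {x, y} \<in> {e})} = P1 \<union> P2"
    unfolding P1_def P2_def by auto
  have "card (P1 \<union> P2) \<le> card P1 + card P2" by (rule card_Un_le)
  then show "card (carrier G) - 3 + card {(x, y). (x, y) \<in> A \<times> B \<and> (y = inv\<^bsub>G\<^esub> x \<or> {x, y} \<in> {e})} \<le> card A * card B"
    unfolding eq using c1 c2 L3[OF pc(2,3)] pc(1) assms(3) by linarith
qed (use assms in simp)

lemma lowA_E:
  assumes "group G" "finite (carrier G)" "\<forall>x\<in>carrier G. inv\<^bsub>G\<^esub> x = x"
  shows "card (carrier G) - 1 \<le> edge_connectivity (carrier G) (NI_edges G)"
proof -
  have "card (carrier G) - 1 \<le> edge_connectivity (carrier G) (NI_edges G - {})"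
  proof (rule lowX[OF assms(1,2)])
    fix A B assume AB: "A \<union> B = carrier G" "A \<inter> B = {}" "A \<noteq> {}" "B \<noteq> {}"
    note pc = part_card[OF AB assms(2)]
    have iA: "\<And>x. x \<in> A \<Longrightarrow> inv\<^bsub>G\<^esub> x = x" using AB(1) assms(3) by auto
    have "{(x, y). (x, y) \<in> A \<times> B \<and> (y = inv\<^bsub>G\<^esub> x \<or> {x, y} \<in> {})} = {}"
      using AB(2) iA by auto
    then show "card (carrier G) - 1 + card {(x, y). (x, y) \<in> A \<times> B \<and> (y = inv\<^bsub>G\<^esub> x \<or> {x, y} \<in> {})} \<le> card A * card B"
      using L1[OF pc(2,3)] pc(1) by (simp only: card.empty add_0_right)
  qed simp
  then show ?thesis by simp
qed

lemma lowA_Ee: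
  assumes "group G" "finite (carrier G)" "\<forall>x\<in>carrier G. inv\<^bsub>G\<^esub> x = x"
  shows "card (carrier G) - 2 \<le> edge_connectivity (carrier G) (NI_edges G - {e})"
proof (rule lowX[OF assms(1,2)])
  fix A B assume AB: "A \<union> B = carrier G" "A \<inter> B = {}" "A \<noteq> {}" "B \<noteq> {}"
  note pc = part_card[OF AB assms(2)]
  let ?P = "{(x, y). (x, y) \<in> A \<times> B \<and> (y = inv\<^bsub>G\<^esub> x \<or> {x, y} \<in> {e})}"
  have iA: "\<And>x. x \<in> A \<Longrightarrow> inv\<^bsub>G\<^esub> x = x" using AB(1) assms(3) by auto
  have P: "?P = {(x, y). (x, y) \<in> A \<times> B \<and> {x, y} = e}" using AB(2) iA by auto
  have "card ?P \<le> min (card A) (card B)"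
    unfolding P
  proof (rule inj_bound[OF pc(4,5)])
    show "inj_on fst {(x, y). (x, y) \<in> A \<times> B \<and> {x, y} = e}"
      using AB by (auto simp: inj_on_def doubleton_eq_iff)
    show "inj_on snd {(x, y). (x, y) \<in> A \<times> B \<and> {x, y} = e}"
      using AB by (auto simp: inj_on_def doubleton_eq_iff)
  qed auto
  then show "card (carrier G) - 2 + card ?P \<le> card A * card B"
    using L2[OF pc(2,3)] pc(1) by linarith
qed (use assms in simp)

lemma lowC:
  assumes "group G" "finite (carrier G)" "t \<in> carrier G" "inv\<^bsub>G\<^esub> t = t"
  shows "card (carrier G) - 2 \<le> edge_connectivity (carrier G) (NI_edges G - {{\<one>\<^bsub>G\<^esub>, t}})"
proof (rule lowX[OF assms(1,2)])
  interpret group G by fact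
  fix A B assume AB: "A \<union> B = carrier G" "A \<inter> B = {}" "A \<noteq> {}" "B \<noteq> {}"
  note pc = part_card[OF AB assms(2)]
  let ?P = "{(x, y). (x, y) \<in> A \<times> B \<and> (y = inv\<^bsub>G\<^esub> x \<or> {x, y} \<in> {{\<one>\<^bsub>G\<^esub>, t}})}"
  have si: "inv\<^bsub>G\<^esub> z = z" if "z \<in> {\<one>\<^bsub>G\<^esub>, t}" for z using that assms(4) by auto
  have "card ?P \<le> min (card A) (card B)"
  proof (rule inj_bound[OF pc(4,5)])
    show "inj_on fst ?P"
    proof (rule inj_onI)
      fix p q assume p: "p \<in> ?P" and q: "q \<in> ?P" and eq: "fst p = fst q"
      obtain x y where pxy: "p = (x, y)" by fastforce
      obtain y' where qxy: "q = (x, y')" using eq pxy by (metis fst_conv prod.collapse)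
      have d: "x \<noteq> y" "x \<noteq> y'" using p q pxy qxy AB by auto
      have "y = y'"
      proof -
        have h1: "y = inv\<^bsub>G\<^esub> x \<or> {x, y} = {\<one>\<^bsub>G\<^esub>, t}" using p pxy by auto
        have h2: "y' = inv\<^bsub>G\<^esub> x \<or> {x, y'} = {\<one>\<^bsub>G\<^esub>, t}" using q qxy by auto
        show ?thesis
        proof (cases "x \<in> {\<one>\<^bsub>G\<^esub>, t}")
          case True
          then have "inv\<^bsub>G\<^esub> x = x" by (rule si)
          then have "{x, y} = {\<one>\<^bsub>G\<^esub>, t}" "{x, y'} = {\<one>\<^bsub>G\<^esub>, t}" using h1 h2 d by auto
          then show ?thesis by (auto simp: doubleton_eq_iff)
        next
          case False
          then show ?thesis using h1 h2 by auto
        qed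
      qed
      then show "p = q" using pxy qxy by simp
    qed
    show "inj_on snd ?P"
    proof (rule inj_onI)
      fix p q assume p: "p \<in> ?P" and q: "q \<in> ?P" and eq: "snd p = snd q"
      obtain x y where pxy: "p = (x, y)" by fastforce
      obtain x' where qxy: "q = (x', y)" using eq pxy by (metis snd_conv prod.collapse)
      have d: "x \<noteq> y" "x' \<noteq> y" "x \<in> carrier G" "x' \<in> carrier G" "y \<in> carrier G"
        using p q pxy qxy AB by auto
      have "x = x'"
      proof -
        have h1: "y = inv\<^bsub>G\<^esub> x \<or> {x, y} = {\<one>\<^bsub>G\<^esub>, t}" using p pxy by auto
        have h2: "y = inv\<^bsub>G\<^esub> x' \<or> {x', y} = {\<one>\<^bsub>G\<^esub>, t}" using q qxy by auto
        show ?thesis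
        proof (cases "y \<in> {\<one>\<^bsub>G\<^esub>, t}")
          case True
          then have iy: "inv\<^bsub>G\<^esub> y = y" by (rule si)
          have "y \<noteq> inv\<^bsub>G\<^esub> x" using d iy by (metis inv_inv)
          moreover have "y \<noteq> inv\<^bsub>G\<^esub> x'" using d iy by (metis inv_inv)
          ultimately have "{x, y} = {\<one>\<^bsub>G\<^esub>, t}" "{x', y} = {\<one>\<^bsub>G\<^esub>, t}" using h1 h2 by auto
          then show ?thesis by (auto simp: doubleton_eq_iff)
        next
          case False
          then have "y = inv\<^bsub>G\<^esub> x" "y = inv\<^bsub>G\<^esub> x'" using h1 h2 by auto
          then show ?thesis using d by (metis inv_inv)
        qed
      qed
      then show "p = q" using pxy qxy by simp
    qed
  qed auto
  then show "card (carrier G) - 2 + card ?P \<le> card A * card B"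
    using L2[OF pc(2,3)] pc(1) by linarith
qed (use assms in simp)

lemma conn_from_ec:
  assumes "1 \<le> edge_connectivity V F"
  shows "graph_connected V F"
proof (cases "card V = 1")
  case True
  then obtain a where "V = {a}" by (auto simp: card_Suc_eq)
  then show ?thesis unfolding graph_connected_def by auto
next
  case False
  show ?thesis
  proof (rule ccontr)
    assume "\<not> graph_connected V F"
    then have "is_edge_cut V F {}" unfolding is_edge_cut_def by auto
    then show False using ec_le[of V F "{}"] assms by simp
  qed
qed

theorem mainTheorem6:
  fixes G :: "('a, 'b) monoid_scheme"
  assumes "group G" and "finite (carrier G)"
  shows "min_edge_connected (carrier G) (NI_edges G) \<longleftrightarrow>
    ((\<forall>x\<in>carrier G. x \<noteq> \<one>\<^bsub>G\<^esub> \<longrightarrow> inv\<^bsub>G\<^esub> x = x) \<or>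
     (\<forall>x\<in>carrier G. x \<noteq> \<one>\<^bsub>G\<^esub> \<longrightarrow> inv\<^bsub>G\<^esub> x \<noteq> x))"
proof -
  interpret group G by fact
  note fin = assms(2)
  show ?thesis
  proof
    assume mec: "min_edge_connected (carrier G) (NI_edges G)"
    show "(\<forall>x\<in>carrier G. x \<noteq> \<one>\<^bsub>G\<^esub> \<longrightarrow> inv\<^bsub>G\<^esub> x = x) \<or> (\<forall>x\<in>carrier G. x \<noteq> \<one>\<^bsub>G\<^esub> \<longrightarrow> inv\<^bsub>G\<^esub> x \<noteq> x)"
    proof (rule ccontr)
      assume "\<not> ?thesis"
      then obtain t x0 where t: "t \<in> carrier G" "t \<noteq> \<one>\<^bsub>G\<^esub>" "inv\<^bsub>G\<^esub> t = t"
        and x0: "x0 \<in> carrier G" "x0 \<noteq> \<one>\<^bsub>G\<^esub>" "inv\<^bsub>G\<^esub> x0 \<noteq> x0" by blast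
      have e0: "{\<one>\<^bsub>G\<^esub>, t} \<in> NI_edges G" using NI_mem[OF assms(1), of "\<one>\<^bsub>G\<^esub>" t] t by auto
      have ix0: "inv\<^bsub>G\<^esub> x0 \<noteq> \<one>\<^bsub>G\<^esub>" "t \<noteq> x0" "t \<noteq> inv\<^bsub>G\<^esub> x0" using x0 t by (metis inv_inv inv_one)+
      have "distinct [\<one>\<^bsub>G\<^esub>, t, x0, inv\<^bsub>G\<^esub> x0]" using t x0 ix0 by (simp only: distinct.simps list.set insert_iff empty_iff) metis
      then have "card {\<one>\<^bsub>G\<^esub>, t, x0, inv\<^bsub>G\<^esub> x0} = 4" using distinct_card by fastforce
      moreover have "{\<one>\<^bsub>G\<^esub>, t, x0, inv\<^bsub>G\<^esub> x0} \<subseteq> carrier G" using t x0 by auto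
      ultimately have n4: "card (carrier G) \<ge> 4" by (metis card_mono fin)
      have "card {x0, inv\<^bsub>G\<^esub> x0} = 2" using x0 by auto
      then have up: "edge_connectivity (carrier G) (NI_edges G) \<le> card (carrier G) - 2"
        using upE[OF assms(1,2) x0(1) one_closed] x0 by auto
      have low: "card (carrier G) - 2 \<le> edge_connectivity (carrier G) (NI_edges G - {{\<one>\<^bsub>G\<^esub>, t}})"
        by (rule lowC[OF assms(1,2) t(1,3)])
      have "edge_connectivity (carrier G) (NI_edges G - {{\<one>\<^bsub>G\<^esub>, t}}) = edge_connectivity (carrier G) (NI_edges G) - 1"
        using mec e0 unfolding min_edge_connected_def by blast
      then show False using up low n4 by linarith
    qed
  next
    assume rhs: "(\<forall>x\<in>carrier G. x \<noteq> \<one>\<^bsub>G\<^esub> \<longrightarrow> inv\<^bsub>G\<^esub> x = x) \<or> (\<forall>x\<in>carrier G. x \<noteq> \<one>\<^bsub>G\<^esub> \<longrightarrow> inv\<^bsub>G\<^esub> x \<noteq> x)"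
    show "min_edge_connected (carrier G) (NI_edges G)"
    proof (cases "\<forall>x\<in>carrier G. x \<noteq> \<one>\<^bsub>G\<^esub> \<longrightarrow> inv\<^bsub>G\<^esub> x = x")
      case True
      then have all: "\<forall>x\<in>carrier G. inv\<^bsub>G\<^esub> x = x" by (metis inv_one)
      show ?thesis
      proof (cases "card (carrier G) = 1")
        case True
        then obtain a where V: "carrier G = {a}" by (auto simp: card_Suc_eq)
        have "NI_edges G = {}" unfolding NI_edges_def using V by auto
        moreover have "graph_connected (carrier G) (NI_edges G)" using V unfolding graph_connected_def by auto
        ultimately show ?thesis unfolding min_edge_connected_def by auto
      next
        case False
        have "card (carrier G) \<noteq> 0" using fin one_closed by auto
        then have "\<not> card (carrier G) \<le> Suc 0" using False by linarith
        then obtain w where w: "w \<in> carrier G" "w \<noteq> \<one>\<^bsub>G\<^esub>"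
          using card_le_Suc0_iff_eq[OF fin] one_closed by blast
        have ec: "edge_connectivity (carrier G) (NI_edges G) = card (carrier G) - 1"
          using upE[OF assms(1,2) one_closed w(1)] w lowA_E[OF assms(1,2) all] by simp
        have "graph_connected (carrier G) (NI_edges G)"
          by (rule conn_from_ec) (use ec False \<open>card (carrier G) \<noteq> 0\<close> in linarith)
        moreover have "edge_connectivity (carrier G) (NI_edges G - {e}) = edge_connectivity (carrier G) (NI_edges G) - 1"
          if e: "e \<in> NI_edges G" for e
        proof -
          obtain x y where xy: "e = {x, y}" "x \<in> carrier G" using e by (auto elim: NI_cases)
          have "card {x, inv\<^bsub>G\<^esub> x} = 1" using all xy by auto
          then have "edge_connectivity (carrier G) (NI_edges G - {e}) \<le> card (carrier G) - 2"
            using upEe[OF assms(1,2) e, of x] xy by auto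
          then show ?thesis using lowA_Ee[OF assms(1,2) all, of e] ec by linarith
        qed
        ultimately show ?thesis unfolding min_edge_connected_def by blast
      qed
    next
      case False
      then obtain x0 where x0: "x0 \<in> carrier G" "x0 \<noteq> \<one>\<^bsub>G\<^esub>" "inv\<^bsub>G\<^esub> x0 \<noteq> x0" by blast
      have none: "\<forall>x\<in>carrier G. x \<noteq> \<one>\<^bsub>G\<^esub> \<longrightarrow> inv\<^bsub>G\<^esub> x \<noteq> x" using rhs False by blast
      have ix0: "inv\<^bsub>G\<^esub> x0 \<noteq> \<one>\<^bsub>G\<^esub>" using x0 by (metis inv_inv inv_one)
      have "distinct [\<one>\<^bsub>G\<^esub>, x0, inv\<^bsub>G\<^esub> x0]" using x0 ix0 by (simp only: distinct.simps list.set insert_iff empty_iff) metis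
      then have "card {\<one>\<^bsub>G\<^esub>, x0, inv\<^bsub>G\<^esub> x0} = 3" using distinct_card by fastforce
      moreover have "{\<one>\<^bsub>G\<^esub>, x0, inv\<^bsub>G\<^esub> x0} \<subseteq> carrier G" using x0 by auto
      ultimately have n3: "card (carrier G) \<ge> 3" by (metis card_mono fin)
      have "card {x0, inv\<^bsub>G\<^esub> x0} = 2" using x0 by auto
      then have ec: "edge_connectivity (carrier G) (NI_edges G) = card (carrier G) - 2"
        using upE[OF assms(1,2) x0(1) one_closed] x0 low_gen_E[OF assms(1,2)] by auto
      have "graph_connected (carrier G) (NI_edges G)"
        by (rule conn_from_ec) (use ec n3 in linarith)
      moreover have "edge_connectivity (carrier G) (NI_edges G - {e}) = edge_connectivity (carrier G) (NI_edges G) - 1"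
        if e: "e \<in> NI_edges G" for e
      proof -
        obtain x y where xy: "e = {x, y}" "x \<in> carrier G" "y \<in> carrier G" "x \<noteq> y"
          using e by (auto elim: NI_cases)
        obtain v where v: "v \<in> e" "v \<in> carrier G" "v \<noteq> \<one>\<^bsub>G\<^esub>" using xy by auto
        have "inv\<^bsub>G\<^esub> v \<noteq> v" using none v by auto
        then have "card {v, inv\<^bsub>G\<^esub> v} = 2" by auto
        then have "edge_connectivity (carrier G) (NI_edges G - {e}) \<le> card (carrier G) - 3"
          using upEe[OF assms(1,2) e v(1)] by auto
        then show ?thesis using low_gen_Ee[OF assms(1,2) n3, of e] ec by linarith
      qed
      ultimately show ?thesis unfolding min_edge_connected_def by blast
    qed
  qed
qed

end
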